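(* Let $G=(V,D,B)$ be a mixed graph with $V=\{1,\dots,n\}$ and let $D_L,D_R\subset D$. Let $G^*_{\mathrm{flow}}$ be the directed graph on $V\cup V'$, $V'=\{1',\dots,n'\}$, with edges $i\to j$ if $(j,i)\in D_L$, $i\to i'$ for all $i\in V$, $i\to j'$ if $(i,j)\in B$, and $i'\to j'$ if $(i,j)\in D_R$. Let $\tilde G=(\tilde V,\tilde D,\emptyset)$ be the bidirected subdivision of $G$: $\tilde V$ is $V$ together with one new vertex $u_{ij}$ for each bidirected edge $i\leftrightarrow j\in G$, and $\tilde D$ is $D$ together with the edges $u_{ij}\to i$ and $u_{ij}\to j$ for each such bidirected edge; let $\tilde D_L$ (resp. $\tilde D_R$) be $D_L$ (resp. $D_R$) together with all these new edges $u_{ij}\to i$, $u_{ij}\to j$. Let $\tilde G^*_{\mathrm{flow}}$ be the directed graph on $\tilde V\cup\tilde V'$ with edges $a\to b$ if $(b,a)\in\tilde D_L$, $a\to a'$ for all $a\in\tilde V$, and $a'\to b'$ if $(a,b)\in\tilde D_R$. In both networks all vertices and edges have capacity $1$. Then for any $S=\{s_1,\dots,s_k\}$, $T=\{t_1,\dots,t_k\}\subset V$, the maximum flow from $S$ to $T'=\{t_1',\dots,t_k'\}$ in $G^*_{\mathrm{flow}}$ equals the maximum flow from $S$ to $T'$ in $\tilde G^*_{\mathrm{flow}}$.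
   Context: A mixed graph $G=(V,D,B)$ has directed edges $D\subset V\times V$ and symmetric bidirected edges $B\subset V\times V$ (a bidirected edge $i\leftrightarrow j$ corresponds to the pair $(i,j),(j,i)\in B$), no self-loops. Maximum flow allows multiple sources and sinks and vertex capacities. *)

theory Defs
  imports Main "HOL.Real"
begin

datatype 'a node = Orig 'a | Prime 'a

(* Vertices of the bidirected subdivision: old vertices, and one new vertex u_{ij}
   per bidirected edge i <-> j, indexed by the unordered pair {i,j} *)
datatype 'a svert = Old 'a | Sub "'a set"

definition mixed_graph :: "nat \<Rightarrow> (nat \<times> nat) set \<Rightarrow> (nat \<times> nat) set \<Rightarrow> bool" where
  "mixed_graph n D B \<longleftrightarrow>
     D \<subseteq> {1..n} \<times> {1..n} \<and> B \<subseteq> {1..n} \<times> {1..n} \<and> sym B \<and>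
     (\<forall>i. (i,i) \<notin> D) \<and> (\<forall>i. (i,i) \<notin> B)"

definition flow_edges :: "'a set \<Rightarrow> ('a \<times> 'a) set \<Rightarrow> ('a \<times> 'a) set \<Rightarrow> ('a node \<times> 'a node) set" where
  "flow_edges W DL DR =
     {(Orig a, Orig b) | a b. (b, a) \<in> DL} \<union> {(Orig a, Prime a) | a. a \<in> W} \<union>
     {(Prime a, Prime b) | a b. (a, b) \<in> DR}"

definition mixed_flow_edges :: "'a set \<Rightarrow> ('a \<times> 'a) set \<Rightarrow> ('a \<times> 'a) set \<Rightarrow> ('a \<times> 'a) set \<Rightarrow> ('a node \<times> 'a node) set" where
  "mixed_flow_edges W DL DR B = flow_edges W DL DR \<union> {(Orig i, Prime j) | i j. (i, j) \<in> B}"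

definition net_vertices :: "'a set \<Rightarrow> 'a node set" where
  "net_vertices W = Orig ` W \<union> Prime ` W"

definition subdiv_vertices :: "'a set \<Rightarrow> ('a \<times> 'a) set \<Rightarrow> 'a svert set" where
  "subdiv_vertices V B = Old ` V \<union> {Sub {i, j} | i j. (i, j) \<in> B}"

definition subdiv_new_edges :: "('a \<times> 'a) set \<Rightarrow> ('a svert \<times> 'a svert) set" where
  "subdiv_new_edges B = {(Sub {i, j}, Old i) | i j. (i, j) \<in> B} \<union> {(Sub {i, j}, Old j) | i j. (i, j) \<in> B}"

definition subdiv_edges :: "('a \<times> 'a) set \<Rightarrow> ('a \<times> 'a) set \<Rightarrow> ('a svert \<times> 'a svert) set" where
  "subdiv_edges D B = map_prod Old Old ` D \<union> subdiv_new_edges B"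

(* Flow in a network (vertex set W, edges E) with unit edge and unit vertex capacities,
   multiple sources S and sinks T: a v is the amount injected at source v, b v the amount
   extracted at sink v. *)
definition is_flow :: "'v set \<Rightarrow> ('v \<times> 'v) set \<Rightarrow> 'v set \<Rightarrow> 'v set \<Rightarrow>
    ('v \<times> 'v \<Rightarrow> real) \<Rightarrow> ('v \<Rightarrow> real) \<Rightarrow> ('v \<Rightarrow> real) \<Rightarrow> bool" where
  "is_flow W E S T f a b \<longleftrightarrow>
     (\<forall>e \<in> E. 0 \<le> f e \<and> f e \<le> 1) \<and>
     (\<forall>v. 0 \<le> a v \<and> 0 \<le> b v) \<and>
     (\<forall>v. v \<notin> S \<inter> W \<longrightarrow> a v = 0) \<and>
     (\<forall>v. v \<notin> T \<inter> W \<longrightarrow> b v = 0) \<and>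
     (\<forall>v \<in> W. a v + (\<Sum>u \<in> {u. (u, v) \<in> E}. f (u, v)) = (\<Sum>w \<in> {w. (v, w) \<in> E}. f (v, w)) + b v) \<and>
     (\<forall>v \<in> W. a v + (\<Sum>u \<in> {u. (u, v) \<in> E}. f (u, v)) \<le> 1)"

definition max_flow :: "'v set \<Rightarrow> ('v \<times> 'v) set \<Rightarrow> 'v set \<Rightarrow> 'v set \<Rightarrow> real" where
  "max_flow W E S T = Sup {(\<Sum>v \<in> S. a v) | f a b. is_flow W E S T f a b}"

end

theory Submission imports Defs begin

lemma node_svert_cases:
  obtains i where "x = Orig (Old i)" | s where "x = Orig (Sub s)"
   | i where "x = Prime (Old i)" | s where "x = Prime (Sub s)"
  by (cases x; rename_tac y; case_tac y) auto

definition other :: "nat set \<Rightarrow> nat \<Rightarrow> nat" where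
  "other s i = (THE j. j \<in> s \<and> j \<noteq> i)"

lemma other_1[simp]: "i \<noteq> j \<Longrightarrow> other {i,j} i = j"
  unfolding other_def by (rule the_equality) auto
lemma other_2[simp]: "i \<noteq> j \<Longrightarrow> other {i,j} j = i"
  unfolding other_def by (rule the_equality) auto

lemma sum_img2:
  assumes "finite A" "finite C" "inj f" "inj g" "\<And>a c. f a \<noteq> g c"
  shows "sum h (f`A \<union> g`C) = (\<Sum>a\<in>A. h (f a)) + (\<Sum>c\<in>C. h (g c))"
proof -
  have "sum h (f`A \<union> g`C) = sum h (f`A) + sum h (g`C)"
    by (rule sum.union_disjoint) (use assms in auto)
  also have "\<dots> = (\<Sum>a\<in>A. h (f a)) + (\<Sum>c\<in>C. h (g c))"
    using assms by (simp add: sum.reindex inj_on_def inj_def)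
  finally show ?thesis .
qed

locale LA =
  fixes V :: "nat set" and B DL DR :: "(nat \<times> nat) set"
  assumes finV: "finite V" and BV: "B \<subseteq> V \<times> V" and symB: "sym B"
    and irrB: "\<And>i. (i,i) \<notin> B" and DLV: "DL \<subseteq> V \<times> V" and DRV: "DR \<subseteq> V \<times> V"
begin

abbreviation "W1 \<equiv> net_vertices V"
abbreviation "E1 \<equiv> mixed_flow_edges V DL DR B"
abbreviation "V2 \<equiv> subdiv_vertices V B"
abbreviation "W2 \<equiv> net_vertices V2"
abbreviation "E2 \<equiv> flow_edges V2 (map_prod Old Old ` DL \<union> subdiv_new_edges B)
              (map_prod Old Old ` DR \<union> subdiv_new_edges B)"

lemma Bsym: "(i,j) \<in> B \<Longrightarrow> (j,i) \<in> B" using symB by (auto simp: sym_def)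
lemma Bne: "(i,j) \<in> B \<Longrightarrow> i \<noteq> j" using irrB by auto

lemma E1_OO[simp]: "(Orig a, Orig b) \<in> E1 \<longleftrightarrow> (b,a) \<in> DL"
  by (auto simp: mixed_flow_edges_def flow_edges_def)
lemma E1_OP[simp]: "(Orig a, Prime b) \<in> E1 \<longleftrightarrow> (a = b \<and> a \<in> V) \<or> (a,b) \<in> B"
  by (auto simp: mixed_flow_edges_def flow_edges_def)
lemma E1_PP[simp]: "(Prime a, Prime b) \<in> E1 \<longleftrightarrow> (a,b) \<in> DR"
  by (auto simp: mixed_flow_edges_def flow_edges_def)
lemma E1_PO[simp]: "(Prime a, Orig b) \<notin> E1"
  by (auto simp: mixed_flow_edges_def flow_edges_def)

lemma W1_O[simp]: "Orig i \<in> W1 \<longleftrightarrow> i \<in> V" by (auto simp: net_vertices_def)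
lemma W1_P[simp]: "Prime i \<in> W1 \<longleftrightarrow> i \<in> V" by (auto simp: net_vertices_def)
lemma W2_O[simp]: "Orig i \<in> W2 \<longleftrightarrow> i \<in> V2" by (auto simp: net_vertices_def)
lemma W2_P[simp]: "Prime i \<in> W2 \<longleftrightarrow> i \<in> V2" by (auto simp: net_vertices_def)
lemma V2_Old[simp]: "Old i \<in> V2 \<longleftrightarrow> i \<in> V" by (auto simp: subdiv_vertices_def)
lemma V2_Sub[simp]: "Sub s \<in> V2 \<longleftrightarrow> (\<exists>i j. (i,j) \<in> B \<and> s = {i,j})"
  by (auto simp: subdiv_vertices_def)

lemma new_iff: "(Sub s, Old a) \<in> subdiv_new_edges B \<longleftrightarrow> (\<exists>j. (a,j) \<in> B \<and> s = {a,j})"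
  unfolding subdiv_new_edges_def using Bsym by (auto simp: insert_commute)

lemma E2_OO_OO[simp]: "(Orig (Old a), Orig (Old b)) \<in> E2 \<longleftrightarrow> (b,a) \<in> DL"
  by (auto simp: flow_edges_def subdiv_new_edges_def)
lemma E2_OO_OS[simp]: "(Orig (Old a), Orig (Sub s)) \<in> E2 \<longleftrightarrow> (\<exists>j. (a,j) \<in> B \<and> s = {a,j})"
proof -
  have "(Orig (Old a), Orig (Sub s)) \<in> E2 \<longleftrightarrow> (Sub s, Old a) \<in> subdiv_new_edges B"
    by (auto simp: flow_edges_def)
  then show ?thesis using new_iff by simp
qed
lemma E2_OS_O[simp]: "(Orig (Sub s), Orig y) \<notin> E2"
  by (auto simp: flow_edges_def subdiv_new_edges_def)
lemma E2_OP[simp]: "(Orig x, Prime y) \<in> E2 \<longleftrightarrow> x = y \<and> x \<in> V2"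
  by (auto simp: flow_edges_def)
lemma E2_PO[simp]: "(Prime x, Orig y) \<notin> E2"
  by (auto simp: flow_edges_def)
lemma E2_PO_PO[simp]: "(Prime (Old a), Prime (Old b)) \<in> E2 \<longleftrightarrow> (a,b) \<in> DR"
  by (auto simp: flow_edges_def subdiv_new_edges_def)
lemma E2_PS_PO[simp]: "(Prime (Sub s), Prime (Old b)) \<in> E2 \<longleftrightarrow> (\<exists>j. (b,j) \<in> B \<and> s = {b,j})"
proof -
  have "(Prime (Sub s), Prime (Old b)) \<in> E2 \<longleftrightarrow> (Sub s, Old b) \<in> subdiv_new_edges B"
    by (auto simp: flow_edges_def)
  then show ?thesis using new_iff by simp
qed
lemma E2_P_PS[simp]: "(Prime x, Prime (Sub s)) \<notin> E2"
  by (auto simp: flow_edges_def subdiv_new_edges_def)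

lemma finDL1: "finite {a. (i,a) \<in> DL}" by (rule finite_subset[OF _ finV]) (use DLV in auto)
lemma finDL2: "finite {a. (a,i) \<in> DL}" by (rule finite_subset[OF _ finV]) (use DLV in auto)
lemma finDR1: "finite {a. (i,a) \<in> DR}" by (rule finite_subset[OF _ finV]) (use DRV in auto)
lemma finDR2: "finite {a. (a,i) \<in> DR}" by (rule finite_subset[OF _ finV]) (use DRV in auto)
lemma finB1: "finite {a. (i,a) \<in> B}" by (rule finite_subset[OF _ finV]) (use BV in auto)
lemma finB2: "finite {a. (a,i) \<in> B}" by (rule finite_subset[OF _ finV]) (use BV in auto)
lemmas fins = finDL1 finDL2 finDR1 finDR2 finB1 finB2

lemma in1_O: "(\<Sum>u\<in>{u. (u, Orig i) \<in> E1}. h u) = (\<Sum>a\<in>{a. (i,a) \<in> DL}. h (Orig a))"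
proof -
  have "{u. (u, Orig i) \<in> E1} = Orig ` {a. (i,a) \<in> DL}"
    by (rule set_eqI, case_tac x) auto
  then show ?thesis by (simp add: sum.reindex inj_on_def)
qed

lemma out1_P: "(\<Sum>u\<in>{u. (Prime i, u) \<in> E1}. h u) = (\<Sum>a\<in>{a. (i,a) \<in> DR}. h (Prime a))"
proof -
  have "{u. (Prime i, u) \<in> E1} = Prime ` {a. (i,a) \<in> DR}"
    by (rule set_eqI, case_tac x) auto
  then show ?thesis by (simp add: sum.reindex inj_on_def)
qed

lemma out1_O: assumes "i \<in> V" shows "(\<Sum>u\<in>{u. (Orig i, u) \<in> E1}. h u) =
   (\<Sum>b\<in>{b. (b,i) \<in> DL}. h (Orig b)) + h (Prime i) + (\<Sum>j\<in>{j. (i,j) \<in> B}. h (Prime j))"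
proof -
  have "{u. (Orig i, u) \<in> E1} = insert (Prime i) (Orig ` {b. (b,i) \<in> DL} \<union> Prime ` {j. (i,j) \<in> B})"
    using assms by (rule_tac set_eqI, case_tac x) auto
  moreover have "Prime i \<notin> Orig ` {b. (b,i) \<in> DL} \<union> Prime ` {j. (i,j) \<in> B}" using irrB by auto
  ultimately show ?thesis
    by (simp add: fins sum_img2 inj_def algebra_simps)
qed

lemma in1_P: assumes "i \<in> V" shows "(\<Sum>u\<in>{u. (u, Prime i) \<in> E1}. h u) =
   h (Orig i) + (\<Sum>a\<in>{a. (a,i) \<in> DR}. h (Prime a)) + (\<Sum>j\<in>{j. (j,i) \<in> B}. h (Orig j))"
proof -
  have "{u. (u, Prime i) \<in> E1} = insert (Orig i) (Prime ` {a. (a,i) \<in> DR} \<union> Orig ` {j. (j,i) \<in> B})"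
    using assms by (rule_tac set_eqI, case_tac x) auto
  moreover have "Orig i \<notin> Prime ` {a. (a,i) \<in> DR} \<union> Orig ` {j. (j,i) \<in> B}" using irrB by auto
  ultimately show ?thesis
    by (simp add: fins sum_img2 inj_def algebra_simps)
qed

lemma inj_sub1: "inj (\<lambda>j. Orig (Sub {i,j}))" by (auto simp: inj_def doubleton_eq_iff)
lemma inj_sub2: "inj (\<lambda>j. Prime (Sub {j,i}))" by (auto simp: inj_def doubleton_eq_iff)

lemma in2_OO: "(\<Sum>u\<in>{u. (u, Orig (Old i)) \<in> E2}. h u) = (\<Sum>a\<in>{a. (i,a) \<in> DL}. h (Orig (Old a)))"
proof -
  have "{u. (u, Orig (Old i)) \<in> E2} = (\<lambda>a. Orig (Old a)) ` {a. (i,a) \<in> DL}"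
    by (rule set_eqI, rule_tac x=x in node_svert_cases) auto
  then show ?thesis by (simp add: sum.reindex inj_on_def)
qed

lemma out2_PO: "(\<Sum>u\<in>{u. (Prime (Old i), u) \<in> E2}. h u) = (\<Sum>a\<in>{a. (i,a) \<in> DR}. h (Prime (Old a)))"
proof -
  have "{u. (Prime (Old i), u) \<in> E2} = (\<lambda>a. Prime (Old a)) ` {a. (i,a) \<in> DR}"
    by (rule set_eqI, rule_tac x=x in node_svert_cases) auto
  then show ?thesis by (simp add: sum.reindex inj_on_def)
qed

lemma out2_OO: assumes "i \<in> V" shows "(\<Sum>u\<in>{u. (Orig (Old i), u) \<in> E2}. h u) =
   (\<Sum>b\<in>{b. (b,i) \<in> DL}. h (Orig (Old b))) + h (Prime (Old i)) + (\<Sum>j\<in>{j. (i,j) \<in> B}. h (Orig (Sub {i,j})))"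
proof -
  have "{u. (Orig (Old i), u) \<in> E2} = insert (Prime (Old i)) ((\<lambda>b. Orig (Old b)) ` {b. (b,i) \<in> DL} \<union> (\<lambda>j. Orig (Sub {i,j})) ` {j. (i,j) \<in> B})"
    using assms by (rule_tac set_eqI, rule_tac x=x in node_svert_cases) auto
  moreover have "Prime (Old i) \<notin> (\<lambda>b. Orig (Old b)) ` {b. (b,i) \<in> DL} \<union> (\<lambda>j. Orig (Sub {i,j})) ` {j. (i,j) \<in> B}" by auto
  ultimately show ?thesis
    by (simp add: fins sum_img2 inj_sub1 inj_def algebra_simps)
qed

lemma in2_PO: assumes "i \<in> V" shows "(\<Sum>u\<in>{u. (u, Prime (Old i)) \<in> E2}. h u) =
   h (Orig (Old i)) + (\<Sum>a\<in>{a. (a,i) \<in> DR}. h (Prime (Old a))) + (\<Sum>j\<in>{j. (j,i) \<in> B}. h (Prime (Sub {j,i})))"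
proof -
  have "{u. (u, Prime (Old i)) \<in> E2} = insert (Orig (Old i)) ((\<lambda>a. Prime (Old a)) ` {a. (a,i) \<in> DR} \<union> (\<lambda>j. Prime (Sub {j,i})) ` {j. (j,i) \<in> B})"
    using assms Bsym by (rule_tac set_eqI, rule_tac x=x in node_svert_cases) (auto simp: insert_commute)
  moreover have "Orig (Old i) \<notin> (\<lambda>a. Prime (Old a)) ` {a. (a,i) \<in> DR} \<union> (\<lambda>j. Prime (Sub {j,i})) ` {j. (j,i) \<in> B}" by auto
  ultimately show ?thesis
    by (simp add: fins sum_img2 inj_sub2 inj_def algebra_simps)
qed

lemma in2_OS: assumes "(i,j) \<in> B" shows "(\<Sum>u\<in>{u. (u, Orig (Sub {i,j})) \<in> E2}. h u) = h (Orig (Old i)) + h (Orig (Old j))"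
proof -
  have "{u. (u, Orig (Sub {i,j})) \<in> E2} = {Orig (Old i), Orig (Old j)}"
    using assms Bsym by (rule_tac set_eqI, rule_tac x=x in node_svert_cases) (auto simp: doubleton_eq_iff)
  then show ?thesis using Bne[OF assms] by simp
qed

lemma out2_PS: assumes "(i,j) \<in> B" shows "(\<Sum>u\<in>{u. (Prime (Sub {i,j}), u) \<in> E2}. h u) = h (Prime (Old i)) + h (Prime (Old j))"
proof -
  have "{u. (Prime (Sub {i,j}), u) \<in> E2} = {Prime (Old i), Prime (Old j)}"
    using assms Bsym by (rule_tac set_eqI, rule_tac x=x in node_svert_cases) (auto simp: doubleton_eq_iff)
  then show ?thesis using Bne[OF assms] by simp
qed

lemma out2_OS: assumes "(i,j) \<in> B" shows "(\<Sum>u\<in>{u. (Orig (Sub {i,j}), u) \<in> E2}. h u) = h (Prime (Sub {i,j}))"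
proof -
  have "{u. (Orig (Sub {i,j}), u) \<in> E2} = {Prime (Sub {i,j})}"
    using assms by (rule_tac set_eqI, rule_tac x=x in node_svert_cases) auto
  then show ?thesis by simp
qed

lemma in2_PS: assumes "(i,j) \<in> B" shows "(\<Sum>u\<in>{u. (u, Prime (Sub {i,j})) \<in> E2}. h u) = h (Orig (Sub {i,j}))"
proof -
  have "{u. (u, Prime (Sub {i,j})) \<in> E2} = {Orig (Sub {i,j})}"
    using assms by (rule_tac set_eqI, rule_tac x=x in node_svert_cases) auto
  then show ?thesis by simp
qed

lemma in2_PO': assumes "i \<in> V" shows "(\<Sum>u\<in>{u. (u, Prime (Old i)) \<in> E2}. h u) =
   h (Orig (Old i)) + (\<Sum>a\<in>{a. (a,i) \<in> DR}. h (Prime (Old a))) + (\<Sum>j\<in>{j. (i,j) \<in> B}. h (Prime (Sub {i,j})))"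
proof -
  have "{j. (j,i) \<in> B} = {j. (i,j) \<in> B}" using Bsym by auto
  then show ?thesis using in2_PO[OF assms, of h] by (simp add: insert_commute)
qed

lemma in1_P': assumes "i \<in> V" shows "(\<Sum>u\<in>{u. (u, Prime i) \<in> E1}. h u) =
   h (Orig i) + (\<Sum>a\<in>{a. (a,i) \<in> DR}. h (Prime a)) + (\<Sum>j\<in>{j. (i,j) \<in> B}. h (Orig j))"
proof -
  have "{j. (j,i) \<in> B} = {j. (i,j) \<in> B}" using Bsym by auto
  then show ?thesis using in1_P[OF assms, of h] by simp
qed

definition xg :: "(nat svert node \<times> nat svert node \<Rightarrow> real) \<Rightarrow> nat \<Rightarrow> nat \<Rightarrow> real" where
  "xg g i j = g (Orig (Old i), Orig (Sub {i,j}))"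
definition pg :: "(nat svert node \<times> nat svert node \<Rightarrow> real) \<Rightarrow> nat \<Rightarrow> nat \<Rightarrow> real" where
  "pg g i j = g (Prime (Sub {i,j}), Prime (Old i))"
definition cg :: "(nat svert node \<times> nat svert node \<Rightarrow> real) \<Rightarrow> nat \<Rightarrow> nat \<Rightarrow> real" where
  "cg g i j = min (xg g i j) (pg g i j)"

fun tA :: "(nat svert node \<times> nat svert node \<Rightarrow> real) \<Rightarrow> nat node \<times> nat node \<Rightarrow> real" where
  "tA g (Orig a, Orig b) = g (Orig (Old a), Orig (Old b))"
| "tA g (Prime a, Prime b) = g (Prime (Old a), Prime (Old b))"
| "tA g (Orig a, Prime b) = (if a = b then g (Orig (Old a), Prime (Old a)) + (\<Sum>j\<in>{j. (a,j) \<in> B}. cg g a j)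
        else xg g a b - cg g a b)"
| "tA g (Prime a, Orig b) = 0"

fun lowr :: "(nat svert node \<Rightarrow> real) \<Rightarrow> nat node \<Rightarrow> real" where
  "lowr a (Orig i) = a (Orig (Old i))"
| "lowr a (Prime i) = a (Prime (Old i))"

lemma min_arith: "(X::real) + Y = P + Q \<Longrightarrow> 0 \<le> X \<Longrightarrow> 0 \<le> Y \<Longrightarrow> 0 \<le> P \<Longrightarrow> 0 \<le> Q \<Longrightarrow>
   min Y Q + X - min X P = Q"
  by (auto simp: min_def)

lemma flowA:
  assumes fl: "is_flow W2 E2 (Orig ` Old ` S) (Prime ` Old ` T) g a b" and SV: "S \<subseteq> V" and TV: "T \<subseteq> V"
  shows "is_flow W1 E1 (Orig ` S) (Prime ` T) (tA g) (lowr a) (lowr b)"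
proof -
  from fl have cap: "\<And>e. e \<in> E2 \<Longrightarrow> 0 \<le> g e \<and> g e \<le> 1"
    and nn: "\<And>v. 0 \<le> a v \<and> 0 \<le> b v"
    and sa: "\<And>v. v \<notin> Orig ` Old ` S \<inter> W2 \<Longrightarrow> a v = 0"
    and sb: "\<And>v. v \<notin> Prime ` Old ` T \<inter> W2 \<Longrightarrow> b v = 0"
    and cons: "\<And>v. v \<in> W2 \<Longrightarrow> a v + (\<Sum>u \<in> {u. (u, v) \<in> E2}. g (u, v)) = (\<Sum>w \<in> {w. (v, w) \<in> E2}. g (v, w)) + b v"
    and vc: "\<And>v. v \<in> W2 \<Longrightarrow> a v + (\<Sum>u \<in> {u. (u, v) \<in> E2}. g (u, v)) \<le> 1"
    unfolding is_flow_def by auto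
  have xnn: "0 \<le> xg g i j" "xg g i j \<le> 1" if "(i,j) \<in> B" for i j
    using cap[of "(Orig (Old i), Orig (Sub {i,j}))"] that by (auto simp: xg_def)
  have pnn: "0 \<le> pg g i j" "pg g i j \<le> 1" if "(i,j) \<in> B" for i j
    using cap[of "(Prime (Sub {i,j}), Prime (Old i))"] that by (auto simp: pg_def)
  have subc: "xg g i j + xg g j i = pg g i j + pg g j i" if ij: "(i,j) \<in> B" for i j
  proof -
    have "Sub {i,j} \<in> V2" using ij by auto
    then have W: "Orig (Sub {i,j}) \<in> W2" "Prime (Sub {i,j}) \<in> W2" by auto
    have "a (Orig (Sub {i,j})) = 0" "b (Orig (Sub {i,j})) = 0" "a (Prime (Sub {i,j})) = 0" "b (Prime (Sub {i,j})) = 0"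
      using sa sb by auto
    then have "g (Orig (Old i), Orig (Sub {i,j})) + g (Orig (Old j), Orig (Sub {i,j})) = g (Orig (Sub {i,j}), Prime (Sub {i,j}))"
      "g (Orig (Sub {i,j}), Prime (Sub {i,j})) = g (Prime (Sub {i,j}), Prime (Old i)) + g (Prime (Sub {i,j}), Prime (Old j))"
      using cons[OF W(1)] cons[OF W(2)] by (simp_all add: in2_OS[OF ij] out2_OS[OF ij] in2_PS[OF ij] out2_PS[OF ij])
    then show ?thesis by (simp add: xg_def pg_def insert_commute)
  qed
  have pair: "cg g j i + xg g i j - cg g i j = pg g j i" if ij: "(i,j) \<in> B" for i j
    using min_arith[OF subc[OF ij] xnn(1)[OF ij] xnn(1)[OF Bsym[OF ij]] pnn(1)[OF ij] pnn(1)[OF Bsym[OF ij]]]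
    by (simp add: cg_def)
  have cx: "cg g i j \<le> xg g i j" "cg g i j \<le> pg g i j" "0 \<le> cg g i j" if "(i,j) \<in> B" for i j
    using xnn[OF that] pnn[OF that] by (auto simp: cg_def)
  have inO: "(\<Sum>u \<in> {u. (u, Orig i) \<in> E1}. tA g (u, Orig i)) = (\<Sum>u \<in> {u. (u, Orig (Old i)) \<in> E2}. g (u, Orig (Old i)))" for i
    by (simp add: in1_O in2_OO)
  have outP: "(\<Sum>u \<in> {u. (Prime i, u) \<in> E1}. tA g (Prime i, u)) = (\<Sum>u \<in> {u. (Prime (Old i), u) \<in> E2}. g (Prime (Old i), u))" for i
    by (simp add: out1_P out2_PO)
  have outO: "(\<Sum>u \<in> {u. (Orig i, u) \<in> E1}. tA g (Orig i, u)) = (\<Sum>u \<in> {u. (Orig (Old i), u) \<in> E2}. g (Orig (Old i), u))"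
    if iV: "i \<in> V" for i
  proof -
    have "(\<Sum>j\<in>{j. (i,j) \<in> B}. tA g (Orig i, Prime j)) = (\<Sum>j\<in>{j. (i,j) \<in> B}. xg g i j - cg g i j)"
      by (rule sum.cong) (auto dest: Bne)
    then show ?thesis using iV
      by (simp add: out1_O out2_OO sum_subtractf xg_def)
  qed
  have inP: "(\<Sum>u \<in> {u. (u, Prime i) \<in> E1}. tA g (u, Prime i)) = (\<Sum>u \<in> {u. (u, Prime (Old i)) \<in> E2}. g (u, Prime (Old i)))"
    if iV: "i \<in> V" for i
  proof -
    have "(\<Sum>j\<in>{j. (i,j) \<in> B}. tA g (Orig j, Prime i)) = (\<Sum>j\<in>{j. (i,j) \<in> B}. xg g j i - cg g j i)"
      by (rule sum.cong) (auto dest: Bne)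
    moreover have "(\<Sum>j\<in>{j. (i,j) \<in> B}. cg g i j) + (\<Sum>j\<in>{j. (i,j) \<in> B}. xg g j i - cg g j i)
        = (\<Sum>j\<in>{j. (i,j) \<in> B}. pg g i j)"
      unfolding sum.distrib[symmetric]
    proof (rule sum.cong)
      fix x assume "x \<in> {j. (i, j) \<in> B}"
      then have "(x,i) \<in> B" using Bsym by auto
      from pair[OF this] show "cg g i x + (xg g x i - cg g x i) = pg g i x" by simp
    qed simp
    ultimately show ?thesis using iV
      by (simp add: in1_P' in2_PO' pg_def algebra_simps)
  qed
  have c1: "0 \<le> tA g e \<and> tA g e \<le> 1" if e: "e \<in> E1" for e
    proof (cases e)
      case (Pair u w)
      show ?thesis
      proof (cases u; cases w)
        fix i j assume u: "u = Orig i" and w: "w = Orig j"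
        then show ?thesis using e Pair cap[of "(Orig (Old i), Orig (Old j))"] by auto
      next
        fix i j assume u: "u = Prime i" and w: "w = Prime j"
        then show ?thesis using e Pair cap[of "(Prime (Old i), Prime (Old j))"] by auto
      next
        fix i j assume u: "u = Prime i" and w: "w = Orig j"
        then show ?thesis using e Pair by auto
      next
        fix i j assume u: "u = Orig i" and w: "w = Prime j"
        show ?thesis
        proof (cases "i = j")
          case False
          then have "(i,j) \<in> B" using e Pair u w by auto
          then show ?thesis using False u w Pair cx[of i j] xnn[of i j] by auto
        next
          case True
          then have iV: "i \<in> V" using e Pair u w BV by auto
          have g0: "0 \<le> g (Orig (Old i), Prime (Old i))" using cap[of "(Orig (Old i), Prime (Old i))"] iV by auto
          have s0: "0 \<le> (\<Sum>j\<in>{j. (i,j) \<in> B}. cg g i j)" by (rule sum_nonneg) (use cx in auto)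
          have s1: "(\<Sum>j\<in>{j. (i,j) \<in> B}. cg g i j) \<le> (\<Sum>j\<in>{j. (i,j) \<in> B}. pg g i j)" by (rule sum_mono) (use cx in auto)
          have s2: "0 \<le> (\<Sum>a\<in>{a. (a,i) \<in> DR}. g (Prime (Old a), Prime (Old i)))"
            by (rule sum_nonneg) (use cap in auto)
          have "a (Prime (Old i)) + (\<Sum>u \<in> {u. (u, Prime (Old i)) \<in> E2}. g (u, Prime (Old i))) \<le> 1"
            using vc[of "Prime (Old i)"] iV by auto
          then have "g (Orig (Old i), Prime (Old i)) + (\<Sum>a\<in>{a. (a,i) \<in> DR}. g (Prime (Old a), Prime (Old i)))
             + (\<Sum>j\<in>{j. (i,j) \<in> B}. pg g i j) \<le> 1"
            using nn[of "Prime (Old i)"] iV by (simp add: in2_PO' pg_def)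
          then show ?thesis using True u w Pair g0 s0 s1 s2 by auto
        qed
      qed
    qed
  have c2: "0 \<le> lowr a v \<and> 0 \<le> lowr b v" for v using nn by (cases v) auto
  have c3: "lowr a v = 0" if "v \<notin> Orig ` S \<inter> W1" for v
    using that sa SV by (cases v) (auto, force)
  have c4: "lowr b v = 0" if "v \<notin> Prime ` T \<inter> W1" for v
    using that sb TV by (cases v) (auto, force)
  have c5: "lowr a v + (\<Sum>u \<in> {u. (u, v) \<in> E1}. tA g (u, v)) = (\<Sum>w \<in> {w. (v, w) \<in> E1}. tA g (v, w)) + lowr b v"
    if v: "v \<in> W1" for v
    proof (cases v)
      case (Orig i) then show ?thesis using v cons[of "Orig (Old i)"] inO[of i] outO[of i] by auto
    next
      case (Prime i) then show ?thesis using v cons[of "Prime (Old i)"] inP[of i] outP[of i] by auto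
    qed
  have c6: "lowr a v + (\<Sum>u \<in> {u. (u, v) \<in> E1}. tA g (u, v)) \<le> 1" if v: "v \<in> W1" for v
    proof (cases v)
      case (Orig i) then show ?thesis using v vc[of "Orig (Old i)"] inO[of i] by auto
    next
      case (Prime i) then show ?thesis using v vc[of "Prime (Old i)"] inP[of i] by auto
    qed
  show ?thesis unfolding is_flow_def using c1 c2 c3 c4 c5 c6 by blast
qed

definition mf :: "(nat node \<times> nat node \<Rightarrow> real) \<Rightarrow> nat \<Rightarrow> nat \<Rightarrow> real" where
  "mf f i j = min (f (Orig i, Prime j)) (f (Orig j, Prime i))"

lemma mf_sym: "mf f i j = mf f j i" by (simp add: mf_def min.commute)

fun tB :: "(nat node \<times> nat node \<Rightarrow> real) \<Rightarrow> nat svert node \<times> nat svert node \<Rightarrow> real" where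
  "tB f (Orig (Old a), Orig (Old b)) = f (Orig a, Orig b)"
| "tB f (Prime (Old a), Prime (Old b)) = f (Prime a, Prime b)"
| "tB f (Orig (Old a), Prime (Old b)) = f (Orig a, Prime a) + (\<Sum>j\<in>{j. (a,j) \<in> B}. mf f a j)"
| "tB f (Orig (Old a), Orig (Sub s)) = f (Orig a, Prime (other s a)) - mf f a (other s a)"
| "tB f (Orig (Sub s), Prime (Sub t)) = (\<Sum>x\<in>s. f (Orig x, Prime (other s x)) - mf f x (other s x))"
| "tB f (Prime (Sub s), Prime (Old b)) = f (Orig (other s b), Prime b) - mf f (other s b) b"
| "tB f _ = 0"

fun liftO :: "(nat node \<Rightarrow> real) \<Rightarrow> nat svert node \<Rightarrow> real" where
  "liftO a (Orig (Old i)) = a (Orig i)"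
| "liftO a (Prime (Old i)) = a (Prime i)"
| "liftO a _ = 0"

lemma flowB:
  assumes fl: "is_flow W1 E1 (Orig ` S) (Prime ` T) f a b" and SV: "S \<subseteq> V" and TV: "T \<subseteq> V"
  shows "is_flow W2 E2 (Orig ` Old ` S) (Prime ` Old ` T) (tB f) (liftO a) (liftO b)"
proof -
  from fl have cap: "\<And>e. e \<in> E1 \<Longrightarrow> 0 \<le> f e \<and> f e \<le> 1"
    and nn: "\<And>v. 0 \<le> a v \<and> 0 \<le> b v"
    and sa: "\<And>v. v \<notin> Orig ` S \<inter> W1 \<Longrightarrow> a v = 0"
    and sb: "\<And>v. v \<notin> Prime ` T \<inter> W1 \<Longrightarrow> b v = 0"
    and cons: "\<And>v. v \<in> W1 \<Longrightarrow> a v + (\<Sum>u \<in> {u. (u, v) \<in> E1}. f (u, v)) = (\<Sum>w \<in> {w. (v, w) \<in> E1}. f (v, w)) + b v"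
    and vc: "\<And>v. v \<in> W1 \<Longrightarrow> a v + (\<Sum>u \<in> {u. (u, v) \<in> E1}. f (u, v)) \<le> 1"
    unfolding is_flow_def by auto
  have fB: "0 \<le> f (Orig i, Prime j)" "f (Orig i, Prime j) \<le> 1" if "(i,j) \<in> B" for i j
    using cap[of "(Orig i, Prime j)"] that by auto
  have mB: "0 \<le> mf f i j" "mf f i j \<le> f (Orig i, Prime j)" "mf f i j \<le> f (Orig j, Prime i)" if "(i,j) \<in> B" for i j
    using fB[OF that] fB[OF Bsym[OF that]] by (auto simp: mf_def)
  have OS: "tB f (Orig (Old i), Orig (Sub {i,j})) = f (Orig i, Prime j) - mf f i j" if "(i,j) \<in> B" for i j
    using Bne[OF that] by simp
  have PS: "tB f (Prime (Sub {i,j}), Prime (Old i)) = f (Orig j, Prime i) - mf f j i" if "(i,j) \<in> B" for i j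
    using Bne[OF that] by simp
  have SS: "tB f (Orig (Sub {i,j}), Prime (Sub {i,j})) = (f (Orig i, Prime j) - mf f i j) + (f (Orig j, Prime i) - mf f j i)"
    if "(i,j) \<in> B" for i j
    using Bne[OF that] by simp
  have inO: "(\<Sum>u \<in> {u. (u, Orig (Old i)) \<in> E2}. tB f (u, Orig (Old i))) = (\<Sum>u \<in> {u. (u, Orig i) \<in> E1}. f (u, Orig i))" for i
    by (simp add: in1_O in2_OO)
  have outP: "(\<Sum>u \<in> {u. (Prime (Old i), u) \<in> E2}. tB f (Prime (Old i), u)) = (\<Sum>u \<in> {u. (Prime i, u) \<in> E1}. f (Prime i, u))" for i
    by (simp add: out1_P out2_PO)
  have outO: "(\<Sum>u \<in> {u. (Orig (Old i), u) \<in> E2}. tB f (Orig (Old i), u)) = (\<Sum>u \<in> {u. (Orig i, u) \<in> E1}. f (Orig i, u))"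
    if iV: "i \<in> V" for i
  proof -
    have "(\<Sum>j\<in>{j. (i,j) \<in> B}. tB f (Orig (Old i), Orig (Sub {i,j}))) = (\<Sum>j\<in>{j. (i,j) \<in> B}. f (Orig i, Prime j) - mf f i j)"
      by (rule sum.cong[OF refl], rule OS) simp
    then show ?thesis using iV
      by (simp add: out1_O out2_OO sum_subtractf)
  qed
  have inP: "(\<Sum>u \<in> {u. (u, Prime (Old i)) \<in> E2}. tB f (u, Prime (Old i))) = (\<Sum>u \<in> {u. (u, Prime i) \<in> E1}. f (u, Prime i))"
    if iV: "i \<in> V" for i
  proof -
    have "(\<Sum>j\<in>{j. (i,j) \<in> B}. tB f (Prime (Sub {i,j}), Prime (Old i))) = (\<Sum>j\<in>{j. (i,j) \<in> B}. f (Orig j, Prime i) - mf f i j)"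
    proof (rule sum.cong[OF refl])
      fix j assume "j \<in> {j. (i,j) \<in> B}"
      then have "(i,j) \<in> B" by simp
      then show "tB f (Prime (Sub {i,j}), Prime (Old i)) = f (Orig j, Prime i) - mf f i j"
        using PS mf_sym by metis
    qed
    then show ?thesis using iV
      by (simp add: in1_P' in2_PO' sum_subtractf)
  qed
  have subv: "\<exists>i j. (i,j) \<in> B \<and> s = {i,j}" if "Sub s \<in> V2" for s using that by simp
  have c1: "0 \<le> tB f e \<and> tB f e \<le> 1" if e: "e \<in> E2" for e
  proof -
    obtain u w where uw: "e = (u,w)" by fastforce
    have e1: "0 \<le> tB f (Orig (Old i), Orig (Old j)) \<and> tB f (Orig (Old i), Orig (Old j)) \<le> 1"
      if "(Orig (Old i), Orig (Old j)) \<in> E2" for i j using that cap[of "(Orig i, Orig j)"] by auto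
    have e2: "0 \<le> tB f (Prime (Old i), Prime (Old j)) \<and> tB f (Prime (Old i), Prime (Old j)) \<le> 1"
      if "(Prime (Old i), Prime (Old j)) \<in> E2" for i j using that cap[of "(Prime i, Prime j)"] by auto
    have e3: "0 \<le> tB f (Orig (Old i), Orig (Sub s)) \<and> tB f (Orig (Old i), Orig (Sub s)) \<le> 1"
      if ed: "(Orig (Old i), Orig (Sub s)) \<in> E2" for i s
    proof -
      obtain j where j: "(i,j) \<in> B" "s = {i,j}" using ed by auto
      show ?thesis using OS[OF j(1)] fB[OF j(1)] mB[OF j(1)] j(2) by auto
    qed
    have e4: "0 \<le> tB f (Prime (Sub s), Prime (Old i)) \<and> tB f (Prime (Sub s), Prime (Old i)) \<le> 1"
      if ed: "(Prime (Sub s), Prime (Old i)) \<in> E2" for i s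
    proof -
      obtain j where j: "(i,j) \<in> B" "s = {i,j}" using ed by auto
      show ?thesis using PS[OF j(1)] fB[OF Bsym[OF j(1)]] mB[OF Bsym[OF j(1)]] j(2) by auto
    qed
    have e5: "0 \<le> tB f (Orig (Sub s), Prime (Sub s)) \<and> tB f (Orig (Sub s), Prime (Sub s)) \<le> 1"
      if ed: "(Orig (Sub s), Prime (Sub s)) \<in> E2" for s
    proof -
      obtain i j where j: "(i,j) \<in> B" "s = {i,j}" using ed by auto
      have "mf f j i = mf f i j" by (rule mf_sym)
      then show ?thesis using SS[OF j(1)] fB[OF j(1)] fB[OF Bsym[OF j(1)]] j(2)
        by (auto simp: mf_def min_def)
    qed
    have e6: "0 \<le> tB f (Orig (Old i), Prime (Old i)) \<and> tB f (Orig (Old i), Prime (Old i)) \<le> 1"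
      if "(Orig (Old i), Prime (Old i)) \<in> E2" for i
    proof -
      have iV: "i \<in> V" using that by simp
      have f0: "0 \<le> f (Orig i, Prime i)" using cap[of "(Orig i, Prime i)"] iV by auto
      have s0: "0 \<le> (\<Sum>j\<in>{j. (i,j) \<in> B}. mf f i j)" by (rule sum_nonneg) (use mB in auto)
      have s1: "(\<Sum>j\<in>{j. (i,j) \<in> B}. mf f i j) \<le> (\<Sum>j\<in>{j. (i,j) \<in> B}. f (Orig j, Prime i))" by (rule sum_mono) (use mB in auto)
      have s2: "0 \<le> (\<Sum>a\<in>{a. (a,i) \<in> DR}. f (Prime a, Prime i))"
        by (rule sum_nonneg) (use cap in auto)
      have "a (Prime i) + (\<Sum>u \<in> {u. (u, Prime i) \<in> E1}. f (u, Prime i)) \<le> 1"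
        using vc[of "Prime i"] iV by auto
      then have "f (Orig i, Prime i) + (\<Sum>a\<in>{a. (a,i) \<in> DR}. f (Prime a, Prime i))
             + (\<Sum>j\<in>{j. (i,j) \<in> B}. f (Orig j, Prime i)) \<le> 1"
        using nn[of "Prime i"] iV by (simp add: in1_P')
      then show ?thesis using f0 s0 s1 s2 by auto
    qed
    show ?thesis using e unfolding uw
      by (cases u rule: node_svert_cases; cases w rule: node_svert_cases) (use e1 e2 e3 e4 e5 e6 in auto)
  qed
  have c2: "0 \<le> liftO a v \<and> 0 \<le> liftO b v" for v using nn by (cases v rule: node_svert_cases) auto
  have c3: "liftO a v = 0" if "v \<notin> Orig ` Old ` S \<inter> W2" for v
    using that sa SV by (cases v rule: node_svert_cases) (auto, force)
  have c4: "liftO b v = 0" if "v \<notin> Prime ` Old ` T \<inter> W2" for v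
    using that sb TV by (cases v rule: node_svert_cases) (auto, force)
  have c56: "liftO a v + (\<Sum>u \<in> {u. (u, v) \<in> E2}. tB f (u, v)) = (\<Sum>w \<in> {w. (v, w) \<in> E2}. tB f (v, w)) + liftO b v
     \<and> liftO a v + (\<Sum>u \<in> {u. (u, v) \<in> E2}. tB f (u, v)) \<le> 1"
    if v: "v \<in> W2" for v
    proof (cases v rule: node_svert_cases)
      case (1 i) then show ?thesis using v cons[of "Orig i"] vc[of "Orig i"] inO[of i] outO[of i] by auto
    next
      case (3 i) then show ?thesis using v cons[of "Prime i"] vc[of "Prime i"] inP[of i] outP[of i] by auto
    next
      case (2 s)
      then obtain i j where j: "(i,j) \<in> B" "s = {i,j}" using v by auto
      have ji: "{j,i} = {i,j}" by (rule insert_commute)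
      have ms: "mf f j i = mf f i j" by (rule mf_sym)
      define X where "X = f (Orig i, Prime j)"
      define Y where "Y = f (Orig j, Prime i)"
      have mm: "mf f i j = min X Y" by (simp add: mf_def X_def Y_def)
      have o2: "tB f (Orig (Old j), Orig (Sub {i,j})) = Y - mf f i j"
        using OS[OF Bsym[OF j(1)]] ms unfolding ji Y_def by simp
      have inS: "(\<Sum>u \<in> {u. (u, v) \<in> E2}. tB f (u, v)) = (X - mf f i j) + (Y - mf f i j)"
        using in2_OS[OF j(1), of "\<lambda>u. tB f (u, Orig (Sub {i,j}))"] OS[OF j(1)] o2 2 j(2)
        by (simp only: X_def)
      have outS: "(\<Sum>w \<in> {w. (v, w) \<in> E2}. tB f (v, w)) = (X - mf f i j) + (Y - mf f i j)"
        using out2_OS[OF j(1), of "\<lambda>w. tB f (Orig (Sub {i,j}), w)"] SS[OF j(1)] ms 2 j(2)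
        by (simp only: X_def Y_def)
      have "X \<le> 1" "Y \<le> 1" "0 \<le> X" "0 \<le> Y" using fB[OF j(1)] fB[OF Bsym[OF j(1)]] by (auto simp: X_def Y_def)
      then show ?thesis using inS outS 2 mm by (auto simp: min_def)
    next
      case (4 s)
      then obtain i j where j: "(i,j) \<in> B" "s = {i,j}" using v by auto
      have ji: "{j,i} = {i,j}" by (rule insert_commute)
      have ms: "mf f j i = mf f i j" by (rule mf_sym)
      define X where "X = f (Orig i, Prime j)"
      define Y where "Y = f (Orig j, Prime i)"
      have mm: "mf f i j = min X Y" by (simp add: mf_def X_def Y_def)
      have p2: "tB f (Prime (Sub {i,j}), Prime (Old j)) = X - mf f i j"
        using PS[OF Bsym[OF j(1)]] unfolding ji X_def by simp
      have p1: "tB f (Prime (Sub {i,j}), Prime (Old i)) = Y - mf f i j"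
        using PS[OF j(1)] ms unfolding Y_def by simp
      have inS: "(\<Sum>u \<in> {u. (u, v) \<in> E2}. tB f (u, v)) = (X - mf f i j) + (Y - mf f i j)"
        using in2_PS[OF j(1), of "\<lambda>u. tB f (u, Prime (Sub {i,j}))"] SS[OF j(1)] ms 4 j(2)
        by (simp only: X_def Y_def)
      have outS: "(\<Sum>w \<in> {w. (v, w) \<in> E2}. tB f (v, w)) = (X - mf f i j) + (Y - mf f i j)"
        using out2_PS[OF j(1), of "\<lambda>w. tB f (Prime (Sub {i,j}), w)"] p1 p2 4 j(2)
        by simp
      have "X \<le> 1" "Y \<le> 1" "0 \<le> X" "0 \<le> Y" using fB[OF j(1)] fB[OF Bsym[OF j(1)]] by (auto simp: X_def Y_def)
      then show ?thesis using inS outS 4 mm by (auto simp: min_def)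
    qed
  show ?thesis unfolding is_flow_def using c1 c2 c3 c4 c56 by blast
qed

lemma flowsets:
  assumes SV: "S \<subseteq> V" and TV: "T \<subseteq> V"
  shows "{(\<Sum>v \<in> Orig ` S. a v) | f a b. is_flow W1 E1 (Orig ` S) (Prime ` T) f a b}
       = {(\<Sum>v \<in> Orig ` Old ` S. a v) | f a b. is_flow W2 E2 (Orig ` Old ` S) (Prime ` Old ` T) f a b}"
proof (rule set_eqI, rule iffI)
  fix x assume "x \<in> {(\<Sum>v \<in> Orig ` S. a v) | f a b. is_flow W1 E1 (Orig ` S) (Prime ` T) f a b}"
  then obtain f a b where x: "x = (\<Sum>v \<in> Orig ` S. a v)" and fl: "is_flow W1 E1 (Orig ` S) (Prime ` T) f a b" by blast
  have "(\<Sum>v \<in> Orig ` Old ` S. liftO a v) = x"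
    unfolding x by (simp add: sum.reindex inj_on_def image_image)
  then show "x \<in> {(\<Sum>v \<in> Orig ` Old ` S. a v) | f a b. is_flow W2 E2 (Orig ` Old ` S) (Prime ` Old ` T) f a b}"
    using flowB[OF fl SV TV] by blast
next
  fix x assume "x \<in> {(\<Sum>v \<in> Orig ` Old ` S. a v) | f a b. is_flow W2 E2 (Orig ` Old ` S) (Prime ` Old ` T) f a b}"
  then obtain f a b where x: "x = (\<Sum>v \<in> Orig ` Old ` S. a v)" and fl: "is_flow W2 E2 (Orig ` Old ` S) (Prime ` Old ` T) f a b" by blast
  have "(\<Sum>v \<in> Orig ` S. lowr a v) = x"
    unfolding x by (simp add: sum.reindex inj_on_def image_image)
  then show "x \<in> {(\<Sum>v \<in> Orig ` S. a v) | f a b. is_flow W1 E1 (Orig ` S) (Prime ` T) f a b}"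
    using flowA[OF fl SV TV] by blast
qed

end

theorem lemmaA6:
  fixes n k :: nat and D B DL DR :: "(nat \<times> nat) set" and S T :: "nat set"
  assumes "mixed_graph n D B"
    and "DL \<subseteq> D" and "DR \<subseteq> D"
    and "S \<subseteq> {1..n}" and "T \<subseteq> {1..n}" and "card S = k" and "card T = k"
  shows "max_flow (net_vertices {1..n}) (mixed_flow_edges {1..n} DL DR B) (Orig ` S) (Prime ` T)
       = max_flow (net_vertices (subdiv_vertices {1..n} B))
           (flow_edges (subdiv_vertices {1..n} B)
              (map_prod Old Old ` DL \<union> subdiv_new_edges B)
              (map_prod Old Old ` DR \<union> subdiv_new_edges B))
           (Orig ` Old ` S) (Prime ` Old ` T)"
proof -
  interpret LA "{1..n}" B DL DR
    using assms(1,2,3) unfolding mixed_graph_def by unfold_locales auto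
  show ?thesis unfolding max_flow_def using flowsets[OF assms(4,5)] by simp
qed

end
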